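(* Fix a round $r\ge 0$ and a block $k\in\{0,1,\dots,K\}$ of the algorithm described in the context, and let $w_{\max}=\max_{0\le t\le \tau_k^r-1} w_k^{r,t}$. Suppose Assumptions (A1)–(A3) hold. If $$\eta_k^r \le \frac{1}{2\,\tau_k^r\, L_k\, w_{\max}},$$ then, almost surely, $$\sum_{t=0}^{\tau_k^r-1} w_k^{r,t}\,\mathbb{E}^r\big[\|g_k^{r,t}-g_k^{r,0}\|^2\big] \le 8(\tau_k^r)^3(\eta_k^r)^2L_k^2\,w_{\max}^3\Big(\|\nabla_k F(\Theta^{r,0})\|^2+\sigma_k^2\Big)$$ and $$\sum_{t=0}^{\tau_k^r-1} (w_k^{r,t})^2\,\mathbb{E}^r\big[\|g_k^{r,t}-g_k^{r,0}\|^2\big] \le 8(\tau_k^r)^3(\eta_k^r)^2L_k^2\,w_{\max}^4\Big(\|\nabla_k F(\Theta^{r,0})\|^2+\sigma_k^2\Big).$$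
   Context: Setting. There are blocks $k=0,1,\dots,K$ (block $0$ is the server, blocks $1,\dots,K$ are parties). The global parameter is $\Theta=(\theta_0,\theta_1,\dots,\theta_K)\in\mathbb{R}^V$ with $\theta_k\in\mathbb{R}^{V_k}$, $V=\sum_k V_k$. There are $N$ data samples; for each $i\in\{1,\dots,N\}$ there is a differentiable loss $l_i:\mathbb{R}^V\to\mathbb{R}$ (in the application $l_i(\Theta)=l_i(\theta_0;h_1(\theta_1;x_1^i),\dots,h_K(\theta_K;x_K^i);y^i)$, but only the function of $\Theta$ matters). The objective is $F(\Theta)=\frac1N\sum_{i=1}^N l_i(\Theta)$, and $\nabla_kF$ denotes the partial gradient of $F$ with respect to the block $\theta_k$. For a mini-batch $\mathcal{B}\subseteq\{1,\dots,N\}$, the stochastic partial gradient is $g_k(\Theta;\mathcal{B})=\frac{1}{|\mathcal{B}|}\sum_{i\in\mathcal{B}}\nabla_{\theta_k}l_i(\Theta)$. Assumptions. (A1) Smoothness: there are constants $L<\infty$ and $L_k<\infty$ ($k=0,\dots,K$) such that for all $i$ and all $\Theta_1,\Theta_2\in\mathbb{R}^V$: $\|\nabla_\Theta l_i(\Theta_1)-\nabla_\Theta l_i(\Theta_2)\|\le L\|\Theta_1-\Theta_2\|$ and $\|\nabla_{\theta_k} l_i(\Theta_1)-\nabla_{\theta_k} l_i(\Theta_2)\|\le L_k\|\Theta_1-\Theta_2\|$. (A2) Unbiasedness: for a random mini-batch $\mathcal{B}$ (drawn as in the algorithm) and every fixed $\Theta$, $\mathbb{E}_{\mathcal{B}}[g_k(\Theta;\mathcal{B})]=\nabla_kF(\Theta)$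 for all $k$. (A3) Bounded variance: there are constants $\sigma_k<\infty$ such that for every fixed $\Theta$, $\mathbb{E}_{\mathcal{B}}\|\nabla_kF(\Theta)-g_k(\Theta;\mathcal{B})\|^2\le\sigma_k^2$. Algorithm (Flex-VFL). Given deterministic positive integers $\tau_k^r\ge1$ (number of local iterations of block $k$ in round $r$), step sizes $\eta_k^r>0$, and weights $w_k^{r,t}\ge 1$, and an initial $\Theta^{0,0}$. In each round $r=0,1,\dots$, a mini-batch $\mathcal{B}^r$ is drawn at random, independently of $\mathcal{B}^0,\dots,\mathcal{B}^{r-1}$ (so that (A2), (A3) hold for $\mathcal{B}^r$ conditionally on the past). Write $\Theta^{r,0}=(\theta_0^{r,0},\dots,\theta_K^{r,0})$. For each block $k$ and $t=0,\dots,\tau_k^r-1$: let $\Gamma_k^{r,t}\in\mathbb{R}^V$ be the vector whose block $k$ equals $\theta_k^{r,t}$ and whose block $j\neq k$ equals $\theta_j^{r,0}$; set $g_k^{r,t}=g_k(\Gamma_k^{r,t};\mathcal{B}^r)$ and $\theta_k^{r,t+1}=\theta_k^{r,t}-\eta_k^r\,w_k^{r,t}\,g_k^{r,t}$. Then $\Theta^{r+1,0}=(\theta_0^{r,\tau_0^r},\dots,\theta_K^{r,\tau_K^r})$. In particular $g_k^{r,0}=g_k(\Theta^{r,0};\mathcal{B}^r)$ and $\theta_k^{r,\tau_k^r}=\theta_k^{r,0}-\eta_k^r\sum_{t=0}^{\tau_k^r-1}w_k^{r,t}g_k^{r,t}$. Notation. $\mathbb{E}^r[\cdot]$ denotes expectation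 over the mini-batch $\mathcal{B}^r$ conditioned on $\Theta^{0,0},\Theta^{1,0},\dots,\Theta^{r,0}$. *)

theory Defs
  imports "HOL-Analysis.Analysis" "HOL-Probability.Probability"
begin

text \<open>Coordinates of the global parameter Theta in R^V are indexed by the finite type 'c
  (V = CARD('c)); blk c is the block (0 = server, 1..K = parties) that coordinate c belongs to.
  A block vector theta_k is represented by its zero-padded embedding into R^V (same norm).\<close>

definition blockproj :: "('c::finite \<Rightarrow> nat) \<Rightarrow> nat \<Rightarrow> real^'c \<Rightarrow> real^'c" where
  "blockproj blk k v = (\<chi> c. if blk c = k then v $ c else 0)"

text \<open>Partial gradient of F = (1/N) sum_{i=1..N} l_i with respect to block k;
  gl i Theta is the gradient of l_i at Theta.\<close>
definition partgradF :: "('c::finite \<Rightarrow> nat) \<Rightarrow> nat \<Rightarrow> (nat \<Rightarrow> real^'c \<Rightarrow> real^'c) \<Rightarrow> nat \<Rightarrow> real^'c \<Rightarrow> real^'c" where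
  "partgradF blk N gl k \<Theta> = (1 / real N) *\<^sub>R (\<Sum>i\<in>{1..N}. blockproj blk k (gl i \<Theta>))"

definition stochgrad :: "('c::finite \<Rightarrow> nat) \<Rightarrow> (nat \<Rightarrow> real^'c \<Rightarrow> real^'c) \<Rightarrow> nat \<Rightarrow> real^'c \<Rightarrow> nat set \<Rightarrow> real^'c" where
  "stochgrad blk gl k \<Theta> B = (1 / real (card B)) *\<^sub>R (\<Sum>i\<in>B. blockproj blk k (gl i \<Theta>))"

text \<open>Gamma_k^{r,t}: the vector whose block k is theta_k^{r,t} and whose other blocks equal
  those of Theta^{r,0} = Theta0, for step size eta, weights w t, mini-batch B.
  Since stochgrad only has block-k components, the update only changes block k.\<close>
primrec localiter :: "('c::finite \<Rightarrow> nat) \<Rightarrow> (nat \<Rightarrow> real^'c \<Rightarrow> real^'c) \<Rightarrow> nat \<Rightarrow> real \<Rightarrow> (nat \<Rightarrow> real)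
    \<Rightarrow> real^'c \<Rightarrow> nat set \<Rightarrow> nat \<Rightarrow> real^'c" where
  "localiter blk gl k \<eta> w \<Theta>0 B 0 = \<Theta>0"
| "localiter blk gl k \<eta> w \<Theta>0 B (Suc t) =
     localiter blk gl k \<eta> w \<Theta>0 B t - (\<eta> * w t) *\<^sub>R stochgrad blk gl k (localiter blk gl k \<eta> w \<Theta>0 B t) B"

end

theory Submission
  imports Defs
begin

lemma sg_lip:
  assumes fin: "finite B" and ne: "B \<noteq> {}"
    and lip: "\<And>i. i \<in> B \<Longrightarrow> norm (blockproj blk k (gl i X) - blockproj blk k (gl i Y)) \<le> c * norm (X - Y)"
  shows "norm (stochgrad blk gl k X B - stochgrad blk gl k Y B) \<le> c * norm (X - Y)"
proof -
  have cp: "real (card B) > 0" using fin ne by (simp add: card_gt_0_iff)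
  have "stochgrad blk gl k X B - stochgrad blk gl k Y B
        = (1 / real (card B)) *\<^sub>R (\<Sum>i\<in>B. blockproj blk k (gl i X) - blockproj blk k (gl i Y))"
    by (simp add: stochgrad_def sum_subtractf scaleR_diff_right)
  hence "norm (stochgrad blk gl k X B - stochgrad blk gl k Y B)
        = (1 / real (card B)) * norm (\<Sum>i\<in>B. blockproj blk k (gl i X) - blockproj blk k (gl i Y))"
    using cp by simp
  also have "\<dots> \<le> (1 / real (card B)) * (\<Sum>i\<in>B. c * norm (X - Y))"
    using cp by (intro mult_left_mono order.trans[OF norm_sum sum_mono] lip) auto
  also have "\<dots> = c * norm (X - Y)" using cp by simp
  finally show ?thesis .
qed

lemma iter_dist:
  assumes "t \<le> \<tau>" and "\<eta> > 0" and "\<And>s. s < \<tau> \<Longrightarrow> w s \<ge> 1"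
  shows "norm (localiter blk gl k \<eta> w X B t - X)
     \<le> \<eta> * (\<Sum>s<t. w s * norm (stochgrad blk gl k (localiter blk gl k \<eta> w X B s) B))"
  using assms(1)
proof (induction t)
  case 0 then show ?case by simp
next
  case (Suc t)
  let ?g = "stochgrad blk gl k (localiter blk gl k \<eta> w X B t) B"
  have wt: "w t \<ge> 1" using Suc.prems assms(3) by auto
  have "norm (localiter blk gl k \<eta> w X B (Suc t) - X)
      = norm ((localiter blk gl k \<eta> w X B t - X) - (\<eta> * w t) *\<^sub>R ?g)" by (simp add: algebra_simps)
  also have "\<dots> \<le> norm (localiter blk gl k \<eta> w X B t - X) + norm ((\<eta> * w t) *\<^sub>R ?g)"
    by (rule norm_triangle_ineq4)
  also have "norm ((\<eta> * w t) *\<^sub>R ?g) = \<eta> * (w t * norm ?g)" using wt assms(2) by simp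
  finally show ?case using Suc by (simp add: distrib_left)
qed

theorem lemma1:
  fixes blk :: "'c::finite \<Rightarrow> nat" and K N :: nat
    and l :: "nat \<Rightarrow> real^'c \<Rightarrow> real" and gl :: "nat \<Rightarrow> real^'c \<Rightarrow> real^'c"
    and L :: real and Lb :: "nat \<Rightarrow> real" and \<sigma> :: "nat \<Rightarrow> real"
    and D :: "nat set pmf"
    and k \<tau> :: nat and \<eta> :: real and w :: "nat \<Rightarrow> real" and \<Theta>0 :: "real^'c"
  assumes blocks: "\<And>c. blk c \<le> K"
    and N_pos: "N \<ge> 1"
    and grad: "\<And>i \<Theta>. i \<in> {1..N} \<Longrightarrow> (l i has_derivative (\<lambda>h. gl i \<Theta> \<bullet> h)) (at \<Theta>)"
    and A1: "\<And>i \<Theta>1 \<Theta>2. i \<in> {1..N} \<Longrightarrow> norm (gl i \<Theta>1 - gl i \<Theta>2) \<le> L * norm (\<Theta>1 - \<Theta>2)"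
    and A1b: "\<And>i j \<Theta>1 \<Theta>2. i \<in> {1..N} \<Longrightarrow> j \<le> K \<Longrightarrow>
       norm (blockproj blk j (gl i \<Theta>1) - blockproj blk j (gl i \<Theta>2)) \<le> Lb j * norm (\<Theta>1 - \<Theta>2)"
    and batches: "\<And>B. B \<in> set_pmf D \<Longrightarrow> B \<subseteq> {1..N} \<and> B \<noteq> {}"
    and A2: "\<And>j \<Theta>. j \<le> K \<Longrightarrow>
       measure_pmf.expectation D (\<lambda>B. stochgrad blk gl j \<Theta> B) = partgradF blk N gl j \<Theta>"
    and A3: "\<And>j \<Theta>. j \<le> K \<Longrightarrow>
       measure_pmf.expectation D (\<lambda>B. (norm (partgradF blk N gl j \<Theta> - stochgrad blk gl j \<Theta> B))\<^sup>2) \<le> (\<sigma> j)\<^sup>2"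
    and k_le: "k \<le> K"
    and tau_pos: "\<tau> \<ge> 1"
    and eta_pos: "\<eta> > 0"
    and w_ge: "\<And>t. t < \<tau> \<Longrightarrow> w t \<ge> 1"
    and step: "2 * real \<tau> * Lb k * Max (w ` {..<\<tau>}) * \<eta> \<le> 1"
  shows "(\<Sum>t<\<tau>. w t * measure_pmf.expectation D (\<lambda>B.
            (norm (stochgrad blk gl k (localiter blk gl k \<eta> w \<Theta>0 B t) B - stochgrad blk gl k \<Theta>0 B))\<^sup>2))
          \<le> 8 * real \<tau> ^ 3 * \<eta>\<^sup>2 * (Lb k)\<^sup>2 * Max (w ` {..<\<tau>}) ^ 3
             * ((norm (partgradF blk N gl k \<Theta>0))\<^sup>2 + (\<sigma> k)\<^sup>2)
      \<and> (\<Sum>t<\<tau>. (w t)\<^sup>2 * measure_pmf.expectation D (\<lambda>B.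
            (norm (stochgrad blk gl k (localiter blk gl k \<eta> w \<Theta>0 B t) B - stochgrad blk gl k \<Theta>0 B))\<^sup>2))
          \<le> 8 * real \<tau> ^ 3 * \<eta>\<^sup>2 * (Lb k)\<^sup>2 * Max (w ` {..<\<tau>}) ^ 4
             * ((norm (partgradF blk N gl k \<Theta>0))\<^sup>2 + (\<sigma> k)\<^sup>2)"
proof -
  define G where "G = (\<lambda>B. stochgrad blk gl k \<Theta>0 B)"
  define gr where "gr = partgradF blk N gl k \<Theta>0"
  define M where "M = Max (w ` {..<\<tau>})"
  define a where "a = Lb k * \<eta> * M"
  define x where "x = (\<lambda>B t. norm (stochgrad blk gl k (localiter blk gl k \<eta> w \<Theta>0 B t) B - stochgrad blk gl k \<Theta>0 B))"
  have fin_supp: "finite (set_pmf D)"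
    by (rule finite_subset[of _ "Pow {1..N}"]) (use batches in auto)
  have wM: "\<And>t. t < \<tau> \<Longrightarrow> w t \<le> M" unfolding M_def by (intro Max_ge) auto
  have M1: "M \<ge> 1" using wM[of 0] w_ge[of 0] tau_pos by auto
  have Lb0: "Lb k \<ge> 0"
  proof (rule ccontr)
    assume neg: "\<not> Lb k \<ge> 0"
    obtain v :: "real^'c" where "v \<noteq> 0" using zero_neq_one[where 'a="real^'c"] by metis
    have "norm (blockproj blk k (gl 1 v) - blockproj blk k (gl 1 0)) \<le> Lb k * norm (v - 0)"
      using A1b[of 1 k v 0] N_pos k_le by auto
    moreover have "Lb k * norm (v - 0) < 0" using neg \<open>v \<noteq> 0\<close>
      by (simp add: mult_neg_pos)
    ultimately show False using norm_ge_zero[of "blockproj blk k (gl 1 v) - blockproj blk k (gl 1 0)"] by linarith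
  qed
  have a0: "a \<ge> 0" unfolding a_def using Lb0 eta_pos M1 by simp
  have aT: "2 * real \<tau> * a \<le> 1" using step unfolding a_def M_def by (simp add: mult_ac)
  have pw: "x B t \<le> 2 * a * real t * norm (G B)" if BD: "B \<in> set_pmf D" and tt: "t < \<tau>" for B t
    using tt
  proof (induction t rule: less_induct)
    case (less t)
    have Bf: "finite B" "B \<noteq> {}" "B \<subseteq> {1..N}" using batches[OF BD] finite_subset by auto
    let ?g = "\<lambda>s. stochgrad blk gl k (localiter blk gl k \<eta> w \<Theta>0 B s) B"
    have "x B t \<le> Lb k * norm (localiter blk gl k \<eta> w \<Theta>0 B t - \<Theta>0)"
      unfolding x_def by (rule sg_lip) (use Bf A1b k_le in auto)
    also have "\<dots> \<le> Lb k * (\<eta> * (\<Sum>s<t. w s * norm (?g s)))"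
      by (rule mult_left_mono[OF iter_dist Lb0]) (use less.prems eta_pos w_ge in auto)
    also have "(\<Sum>s<t. w s * norm (?g s)) \<le> (\<Sum>s<t. M * (2 * norm (G B)))"
    proof (rule sum_mono)
      fix s assume s: "s \<in> {..<t}"
      have st: "s < \<tau>" using s less.prems by auto
      have as1: "2 * a * real s \<le> 2 * real \<tau> * a" using st a0 by (simp add: mult_left_mono mult_ac)
      have "norm (?g s) \<le> x B s + norm (G B)" unfolding x_def G_def
        using norm_triangle_ineq2[of "?g s" "stochgrad blk gl k \<Theta>0 B"] by linarith
      also have "x B s \<le> 2 * a * real s * norm (G B)" using less.IH[of s] s st by auto
      also have "2 * a * real s * norm (G B) \<le> 1 * norm (G B)"
        using as1 aT by (intro mult_right_mono) auto
      finally have "norm (?g s) \<le> 2 * norm (G B)" by simp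
      then show "w s * norm (?g s) \<le> M * (2 * norm (G B))"
        using wM[OF st] w_ge[OF st] by (intro mult_mono) auto
    qed
    hence "Lb k * (\<eta> * (\<Sum>s<t. w s * norm (?g s))) \<le> Lb k * (\<eta> * (\<Sum>s<t. M * (2 * norm (G B))))"
      using Lb0 eta_pos by (intro mult_left_mono) auto
    also have "\<dots> = 2 * a * real t * norm (G B)" unfolding a_def by simp
    finally show ?case .
  qed
  define C where "C = 8 * a^2 * real \<tau>^2 * ((norm gr)\<^sup>2 + (\<sigma> k)\<^sup>2)"
  have C0: "C \<ge> 0" unfolding C_def by simp
  have Eb: "measure_pmf.expectation D (\<lambda>B. (x B t)\<^sup>2) \<le> C" if tt: "t < \<tau>" for t
  proof -
    have "measure_pmf.expectation D (\<lambda>B. (x B t)\<^sup>2)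
       \<le> measure_pmf.expectation D (\<lambda>B. 8 * a^2 * real \<tau>^2 * (norm gr)\<^sup>2
             + 8 * a^2 * real \<tau>^2 * (norm (gr - G B))\<^sup>2)"
    proof (rule integral_mono_AE)
      show "integrable D (\<lambda>B. (x B t)\<^sup>2)" by (rule integrable_measure_pmf_finite[OF fin_supp])
      show "integrable D (\<lambda>B. 8 * a^2 * real \<tau>^2 * (norm gr)\<^sup>2
             + 8 * a^2 * real \<tau>^2 * (norm (gr - G B))\<^sup>2)" by (rule integrable_measure_pmf_finite[OF fin_supp])
      show "AE B in D. (x B t)\<^sup>2 \<le> 8 * a^2 * real \<tau>^2 * (norm gr)\<^sup>2
             + 8 * a^2 * real \<tau>^2 * (norm (gr - G B))\<^sup>2"
        unfolding AE_measure_pmf_iff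
      proof
        fix B assume BD: "B \<in> set_pmf D"
        have x0: "x B t \<ge> 0" unfolding x_def by simp
        have r1: "2 * a * real t \<le> 2 * a * real \<tau>" using tt a0 by (intro mult_left_mono) auto
        have r2: "2 * a * real t * norm (G B) \<le> 2 * a * real \<tau> * norm (G B)"
          by (rule mult_right_mono[OF r1]) simp
        have "x B t \<le> 2 * a * real \<tau> * norm (G B)"
          using pw[OF BD tt] r2 by linarith
        hence q1: "(x B t)\<^sup>2 \<le> (2 * a * real \<tau> * norm (G B))\<^sup>2" using x0 by (intro power_mono) auto
        have q2: "(2 * a * real \<tau> * norm (G B))\<^sup>2 = (4 * a^2 * real \<tau>^2) * (norm (G B))\<^sup>2" by (simp add: power_mult_distrib)
        have q3: "(norm (G B))\<^sup>2 \<le> 2 * (norm gr)\<^sup>2 + 2 * (norm (gr - G B))\<^sup>2"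
        proof -
          have "norm (G B) \<le> norm gr + norm (gr - G B)"
            using norm_triangle_ineq4[of gr "gr - G B"] by simp
          hence "(norm (G B))\<^sup>2 \<le> (norm gr + norm (gr - G B))\<^sup>2" by (intro power_mono) auto
          also have "\<dots> \<le> 2 * (norm gr)\<^sup>2 + 2 * (norm (gr - G B))\<^sup>2"
            using zero_le_power2[of "norm gr - norm (gr - G B)"]
            unfolding power2_diff power2_sum by linarith
          finally show ?thesis .
        qed
        have q4: "(4 * a^2 * real \<tau>^2) * (norm (G B))\<^sup>2 \<le> (4 * a^2 * real \<tau>^2) * (2 * (norm gr)\<^sup>2 + 2 * (norm (gr - G B))\<^sup>2)"
          by (rule mult_left_mono[OF q3]) simp
        show "(x B t)\<^sup>2 \<le> 8 * a^2 * real \<tau>^2 * (norm gr)\<^sup>2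
             + 8 * a^2 * real \<tau>^2 * (norm (gr - G B))\<^sup>2"
          using q1 q2 q4 by (simp add: algebra_simps)
      qed
    qed
    also have "\<dots> = 8 * a^2 * real \<tau>^2 * (norm gr)\<^sup>2
             + 8 * a^2 * real \<tau>^2 * measure_pmf.expectation D (\<lambda>B. (norm (gr - G B))\<^sup>2)"
      by (simp add: integrable_measure_pmf_finite[OF fin_supp])
    also have "\<dots> \<le> 8 * a^2 * real \<tau>^2 * (norm gr)\<^sup>2 + 8 * a^2 * real \<tau>^2 * (\<sigma> k)\<^sup>2"
      using A3[OF k_le, of \<Theta>0] unfolding gr_def G_def by (intro add_left_mono mult_left_mono) auto
    also have "\<dots> = C" unfolding C_def by (simp add: algebra_simps)
    finally show ?thesis .
  qed
  have E0: "measure_pmf.expectation D (\<lambda>B. (x B t)\<^sup>2) \<ge> 0" for t by simp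
  have S1: "(\<Sum>t<\<tau>. w t * measure_pmf.expectation D (\<lambda>B. (x B t)\<^sup>2)) \<le> (\<Sum>t<\<tau>. M * C)"
    by (rule sum_mono) (use wM w_ge Eb E0 M1 in \<open>auto intro!: mult_mono\<close>)
  have S2: "(\<Sum>t<\<tau>. (w t)\<^sup>2 * measure_pmf.expectation D (\<lambda>B. (x B t)\<^sup>2)) \<le> (\<Sum>t<\<tau>. M^2 * C)"
  proof (rule sum_mono)
    fix t assume "t \<in> {..<\<tau>}"
    hence tt: "t < \<tau>" by simp
    have "(w t)\<^sup>2 \<le> M^2" using wM[OF tt] w_ge[OF tt] by (intro power_mono) auto
    then show "(w t)\<^sup>2 * measure_pmf.expectation D (\<lambda>B. (x B t)\<^sup>2) \<le> M^2 * C"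
      using Eb[OF tt] E0[of t] by (intro mult_mono) auto
  qed
  have e1: "(\<Sum>t<\<tau>. M * C) = 8 * real \<tau> ^ 3 * \<eta>\<^sup>2 * (Lb k)\<^sup>2 * M ^ 3 * ((norm gr)\<^sup>2 + (\<sigma> k)\<^sup>2)"
    unfolding C_def a_def by (simp add: power2_eq_square power3_eq_cube)
  have e2: "(\<Sum>t<\<tau>. M^2 * C) = 8 * real \<tau> ^ 3 * \<eta>\<^sup>2 * (Lb k)\<^sup>2 * M ^ 4 * ((norm gr)\<^sup>2 + (\<sigma> k)\<^sup>2)"
    unfolding C_def a_def by (simp add: power2_eq_square power3_eq_cube power4_eq_xxxx)
  show ?thesis using S1 S2 e1 e2 unfolding x_def gr_def M_def by simp
qed

end
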